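(* Let $W$ be a subcomplex of a simplicial complex $K$ on $[m]$, and let $\mathcal I_{K\setminus W}$ be the kernel of the natural quotient map $\mathbb Z[K]\to\mathbb Z[W]$. Then the annihilator $(0:_{\mathbb Z[K]}\mathcal I_{K\setminus W})$ is the ideal generated by the monomials $x_\sigma$ with $\sigma\in W\setminus\overline{K\setminus W}$.
   Context: $\mathbb Z[K]=\mathbb Z[x_1,\dots,x_m]/\langle x_\sigma:\sigma\notin K\rangle$ is the Stanley–Reisner ring, $x_\sigma=\prod_{i\in\sigma}x_i$. For a subset $Y$ of a simplicial complex, $\overline Y$ denotes the smallest subcomplex containing $Y$ (all subsets of members of $Y$). *)

theory Defs
  imports "HOL-Library.Poly_Mapping" "HOL-Algebra.QuotRing"
begin

definition simplicial_complex :: "nat \<Rightarrow> nat set set \<Rightarrow> bool" where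
  "simplicial_complex m K \<longleftrightarrow> K \<subseteq> Pow {1..m} \<and> (\<forall>\<sigma>\<in>K. \<forall>\<tau>. \<tau> \<subseteq> \<sigma> \<longrightarrow> \<tau> \<in> K)"

definition cl :: "nat set set \<Rightarrow> nat set set" where
  "cl Y = {\<tau>. \<exists>\<sigma>\<in>Y. \<tau> \<subseteq> \<sigma>}"

(* multivariate integer polynomials: monomials are exponent vectors nat \<Rightarrow>\<^sub>0 nat *)
type_synonym zpoly = "(nat \<Rightarrow>\<^sub>0 nat) \<Rightarrow>\<^sub>0 int"

definition var :: "nat \<Rightarrow> zpoly" where
  "var i = Poly_Mapping.single (Poly_Mapping.single i 1) 1"

definition xmon :: "nat set \<Rightarrow> zpoly" where
  "xmon \<sigma> = (\<Prod>i\<in>\<sigma>. var i)"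

(* the polynomial ring Z[x_1,...,x_m] as a HOL-Algebra ring *)
definition ZPoly :: "nat \<Rightarrow> zpoly ring" where
  "ZPoly m = \<lparr>carrier = {p :: zpoly. \<forall>a\<in>Poly_Mapping.keys p. Poly_Mapping.keys a \<subseteq> {1..m}},
              mult = (*), one = 1, zero = 0, add = (+)\<rparr>"

definition SR_ideal :: "nat \<Rightarrow> nat set set \<Rightarrow> zpoly set" where
  "SR_ideal m K = Idl\<^bsub>ZPoly m\<^esub> {xmon \<sigma> | \<sigma>. \<sigma> \<subseteq> {1..m} \<and> \<sigma> \<notin> K}"

definition SR_ring :: "nat \<Rightarrow> nat set set \<Rightarrow> zpoly set ring" where
  "SR_ring m K = ZPoly m Quot SR_ideal m K"

definition SR_xmon :: "nat \<Rightarrow> nat set set \<Rightarrow> nat set \<Rightarrow> zpoly set" where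
  "SR_xmon m K \<sigma> = SR_ideal m K +>\<^bsub>ZPoly m\<^esub> xmon \<sigma>"

(* natural quotient map Z[K] \<rightarrow> Z[W] (for W \<subseteq> K): the coset f + I_K goes to f + I_W *)
definition SR_restrict :: "nat \<Rightarrow> nat set set \<Rightarrow> zpoly set \<Rightarrow> zpoly set" where
  "SR_restrict m W C = SR_ideal m W <+>\<^bsub>ZPoly m\<^esub> C"

definition annihilator :: "('a, 'b) ring_scheme \<Rightarrow> 'a set \<Rightarrow> 'a set" where
  "annihilator R J = {a \<in> carrier R. \<forall>b\<in>J. a \<otimes>\<^bsub>R\<^esub> b = \<zero>\<^bsub>R\<^esub>}"

end

theory Submission imports Defs begin

definition pc :: "nat \<Rightarrow> zpoly \<Rightarrow> bool" where
  "pc m p \<longleftrightarrow> (\<forall>a\<in>Poly_Mapping.keys p. Poly_Mapping.keys a \<subseteq> {1..m})"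

lemma carrier_ZPoly: "carrier (ZPoly m) = {p. pc m p}"
  by (simp add: ZPoly_def pc_def)

lemma ZPoly_simps [simp]: "mult (ZPoly m) = (*)" "add (ZPoly m) = (+)"
  "one (ZPoly m) = 1" "zero (ZPoly m) = 0"
  by (simp_all add: ZPoly_def)

lemma keys_add_nat: "Poly_Mapping.keys ((a::nat \<Rightarrow>\<^sub>0 nat) + b) = Poly_Mapping.keys a \<union> Poly_Mapping.keys b"
  by (auto simp: in_keys_iff lookup_add)

lemma keys_mult_obtain:
  assumes "c \<in> Poly_Mapping.keys ((p::zpoly) * q)"
  obtains a b where "a \<in> Poly_Mapping.keys p" "b \<in> Poly_Mapping.keys q" "c = a + b"
  using keys_mult[of p q] assms by blast

lemma pc_add: "pc m p \<Longrightarrow> pc m q \<Longrightarrow> pc m (p + q)"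
  unfolding pc_def using keys_add[of p q] by blast

lemma pc_mult: "pc m p \<Longrightarrow> pc m q \<Longrightarrow> pc m (p * q)"
  unfolding pc_def by (metis Un_subset_iff keys_add_nat keys_mult_obtain)

lemma pc_uminus: "pc m p \<Longrightarrow> pc m (- p)"
  unfolding pc_def by simp

lemma pc_0: "pc m 0" and pc_1: "pc m 1"
  unfolding pc_def by auto

lemma cring_ZPoly: "cring (ZPoly m)"
proof (rule cringI)
  show "abelian_group (ZPoly m)"
    by (rule abelian_groupI) (auto simp: carrier_ZPoly pc_add pc_0 algebra_simps
         intro!: bexI[of _ "- _"] pc_uminus)
  show "comm_monoid (ZPoly m)"
    by (rule comm_monoidI) (auto simp: carrier_ZPoly pc_mult pc_1 algebra_simps)
qed (auto simp: algebra_simps)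

lemma ring_ZPoly: "ring (ZPoly m)"
  using cring_ZPoly cring.axioms(1) by blast

lemma a_inv_ZPoly: "p \<in> carrier (ZPoly m) \<Longrightarrow> a_inv (ZPoly m) p = - p"
proof -
  assume p: "p \<in> carrier (ZPoly m)"
  interpret ring "ZPoly m" by (rule ring_ZPoly)
  show ?thesis
    by (rule minus_equality) (use p in \<open>auto simp: carrier_ZPoly pc_uminus\<close>)
qed

lemma ideal_sum:
  assumes "ideal I (ZPoly m)" "finite F" "\<And>x. x \<in> F \<Longrightarrow> f x \<in> I"
  shows "sum f F \<in> I"
  using assms(2,3)
proof (induction F rule: finite_induct)
  case empty
  then show ?case using additive_subgroup.zero_closed[OF ideal.axioms(1)[OF assms(1)]] by simp
next
  case (insert x F)
  then show ?case using additive_subgroup.a_closed[OF ideal.axioms(1)[OF assms(1)], of "f x" "sum f F"]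
    by simp
qed

definition E :: "nat set \<Rightarrow> (nat \<Rightarrow>\<^sub>0 nat)" where
  "E \<sigma> = (\<Sum>i\<in>\<sigma>. Poly_Mapping.single i 1)"

lemma lookup_E: "finite \<sigma> \<Longrightarrow> Poly_Mapping.lookup (E \<sigma>) i = (if i \<in> \<sigma> then 1 else 0)"
  by (simp add: E_def lookup_sum lookup_single when_def)

lemma keys_E: "finite \<sigma> \<Longrightarrow> Poly_Mapping.keys (E \<sigma>) = \<sigma>"
  by (auto simp: in_keys_iff lookup_E split: if_splits)

lemma xmon_single: "finite \<sigma> \<Longrightarrow> xmon \<sigma> = Poly_Mapping.single (E \<sigma>) 1"
proof (induction \<sigma> rule: finite_induct)
  case empty
  then show ?case by (simp add: xmon_def E_def)
next
  case (insert x F)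
  then show ?case by (simp add: xmon_def E_def var_def mult_single add.commute)
qed

lemma lookup_mult_single_shift:
  "Poly_Mapping.lookup ((g::zpoly) * Poly_Mapping.single e 1) (a + e) = Poly_Mapping.lookup g a"
proof -
  have 1: "\<And>aa. (\<Sum>ab. (Poly_Mapping.lookup (Poly_Mapping.single e (1::int)) ab when a + e = aa + ab))
     = ((1::int) when aa = a)"
  proof -
    fix aa
    have "(\<lambda>ab. (Poly_Mapping.lookup (Poly_Mapping.single e (1::int)) ab when a + e = aa + ab))
      = (\<lambda>ab. ((1::int) when aa = a) when ab = e)"
      by (auto simp: fun_eq_iff lookup_single when_def)
    then show "?thesis aa" by (simp only: Sum_any_when_equal)
  qed
  show ?thesis
    by (simp only: lookup_mult 1 mult_when mult_1_right Sum_any_when_equal)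
qed

definition mideal :: "nat \<Rightarrow> nat set set \<Rightarrow> zpoly set" where
  "mideal m S = {p. pc m p \<and> (\<forall>a\<in>Poly_Mapping.keys p. \<exists>\<sigma>\<in>S. \<sigma> \<subseteq> Poly_Mapping.keys a)}"

lemma mideal_ideal: "ideal (mideal m S) (ZPoly m)"
proof (rule idealI[OF ring_ZPoly])
  interpret R: ring "ZPoly m" by (rule ring_ZPoly)
  show "subgroup (mideal m S) (add_monoid (ZPoly m))"
  proof (rule group.subgroupI[OF R.a_group])
    show "mideal m S \<subseteq> carrier (add_monoid (ZPoly m))"
      by (auto simp: mideal_def carrier_ZPoly)
    show "mideal m S \<noteq> {}"
      using pc_0 by (auto simp: mideal_def intro!: exI[of _ 0])
  next
    fix a assume a: "a \<in> mideal m S"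
    then have "inv\<^bsub>add_monoid (ZPoly m)\<^esub> a = - a"
      using a_inv_ZPoly[of a m] by (simp add: a_inv_def mideal_def carrier_ZPoly)
    then show "inv\<^bsub>add_monoid (ZPoly m)\<^esub> a \<in> mideal m S"
      using a by (simp add: mideal_def pc_uminus)
  next
    fix a b assume a: "a \<in> mideal m S" and b: "b \<in> mideal m S"
    then show "a \<otimes>\<^bsub>add_monoid (ZPoly m)\<^esub> b \<in> mideal m S"
      using keys_add[of a b] by (auto simp: mideal_def pc_add)
  qed
next
  fix a x assume a: "a \<in> mideal m S" and x: "x \<in> carrier (ZPoly m)"
  show "x \<otimes>\<^bsub>ZPoly m\<^esub> a \<in> mideal m S"
    using a x unfolding mideal_def carrier_ZPoly
    by (auto simp: pc_mult elim!: keys_mult_obtain) (metis keys_add_nat sup.coboundedI2)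
  show "a \<otimes>\<^bsub>ZPoly m\<^esub> x \<in> mideal m S"
    using a x unfolding mideal_def carrier_ZPoly
    by (auto simp: pc_mult elim!: keys_mult_obtain) (metis keys_add_nat sup.coboundedI1)
qed

lemma poly_sum_monomials: "(p::zpoly) = (\<Sum>a\<in>Poly_Mapping.keys p. Poly_Mapping.single a (Poly_Mapping.lookup p a))"
proof (rule poly_mapping_eqI)
  fix k
  show "Poly_Mapping.lookup p k = Poly_Mapping.lookup (\<Sum>a\<in>Poly_Mapping.keys p. Poly_Mapping.single a (Poly_Mapping.lookup p a)) k"
    by (simp add: lookup_sum lookup_single when_def in_keys_iff)
qed

lemma xmon_in_carrier: "\<sigma> \<subseteq> {1..m} \<Longrightarrow> xmon \<sigma> \<in> carrier (ZPoly m)"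
  using finite_subset[of \<sigma> "{1..m}"]
  by (auto simp: xmon_single carrier_ZPoly pc_def keys_E)

lemma mideal_eq:
  assumes S: "\<forall>\<sigma>\<in>S. \<sigma> \<subseteq> {1..m}"
  shows "Idl\<^bsub>ZPoly m\<^esub> (xmon ` S) = mideal m S"
proof
  interpret R: ring "ZPoly m" by (rule ring_ZPoly)
  have Sc: "xmon ` S \<subseteq> carrier (ZPoly m)" using S xmon_in_carrier by blast
  show "Idl\<^bsub>ZPoly m\<^esub> (xmon ` S) \<subseteq> mideal m S"
  proof (rule R.genideal_minimal[OF mideal_ideal])
    show "xmon ` S \<subseteq> mideal m S"
    proof
      fix x assume "x \<in> xmon ` S"
      then obtain \<sigma> where s: "\<sigma> \<in> S" "x = xmon \<sigma>" by blast
      then have f: "finite \<sigma>" using S finite_subset[of \<sigma> "{1..m}"] by auto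
      show "x \<in> mideal m S"
        using s S f by (auto simp: mideal_def xmon_single pc_def keys_E)
    qed
  qed
  show "mideal m S \<subseteq> Idl\<^bsub>ZPoly m\<^esub> (xmon ` S)"
  proof
    fix p assume p: "p \<in> mideal m S"
    have I: "ideal (Idl\<^bsub>ZPoly m\<^esub> (xmon ` S)) (ZPoly m)" by (rule R.genideal_ideal[OF Sc])
    have "(\<Sum>a\<in>Poly_Mapping.keys p. Poly_Mapping.single a (Poly_Mapping.lookup p a)) \<in> Idl\<^bsub>ZPoly m\<^esub> (xmon ` S)"
    proof (rule ideal_sum[OF I finite_keys])
      fix a assume a: "a \<in> Poly_Mapping.keys p"
      with p obtain \<sigma> where s: "\<sigma> \<in> S" "\<sigma> \<subseteq> Poly_Mapping.keys a"
        by (auto simp: mideal_def)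
      have ka: "Poly_Mapping.keys a \<subseteq> {1..m}" using p a by (auto simp: mideal_def pc_def)
      have f: "finite \<sigma>" using s S finite_subset[of \<sigma> "{1..m}"] by auto
      have eq: "a - E \<sigma> + E \<sigma> = a"
      proof (rule poly_mapping_eqI)
        fix i show "Poly_Mapping.lookup (a - E \<sigma> + E \<sigma>) i = Poly_Mapping.lookup a i"
          using s(2) f by (auto simp: lookup_add lookup_minus lookup_E in_keys_iff)
      qed
      have kd: "Poly_Mapping.keys (a - E \<sigma>) \<subseteq> Poly_Mapping.keys a"
        by (auto simp: in_keys_iff lookup_minus)
      have c: "Poly_Mapping.single (a - E \<sigma>) (Poly_Mapping.lookup p a) \<in> carrier (ZPoly m)"
        using kd ka by (auto simp: carrier_ZPoly pc_def)
      have x: "xmon \<sigma> \<in> Idl\<^bsub>ZPoly m\<^esub> (xmon ` S)"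
        using R.genideal_self[OF Sc] s(1) by blast
      have "Poly_Mapping.single a (Poly_Mapping.lookup p a)
          = Poly_Mapping.single (a - E \<sigma>) (Poly_Mapping.lookup p a) \<otimes>\<^bsub>ZPoly m\<^esub> xmon \<sigma>"
        using f by (simp add: xmon_single mult_single eq)
      then show "Poly_Mapping.single a (Poly_Mapping.lookup p a) \<in> Idl\<^bsub>ZPoly m\<^esub> (xmon ` S)"
        using ideal.I_l_closed[OF I x c] by simp
    qed
    then show "p \<in> Idl\<^bsub>ZPoly m\<^esub> (xmon ` S)" using poly_sum_monomials[of p] by simp
  qed
qed

lemma SR_ideal_eq:
  assumes K: "simplicial_complex m K"
  shows "SR_ideal m K = {p. pc m p \<and> (\<forall>a\<in>Poly_Mapping.keys p. Poly_Mapping.keys a \<notin> K)}"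
proof -
  have "{xmon \<sigma> | \<sigma>. \<sigma> \<subseteq> {1..m} \<and> \<sigma> \<notin> K} = xmon ` {\<sigma>. \<sigma> \<subseteq> {1..m} \<and> \<sigma> \<notin> K}" by blast
  then have "SR_ideal m K = mideal m {\<sigma>. \<sigma> \<subseteq> {1..m} \<and> \<sigma> \<notin> K}"
    unfolding SR_ideal_def by (simp add: mideal_eq)
  also have "\<dots> = {p. pc m p \<and> (\<forall>a\<in>Poly_Mapping.keys p. Poly_Mapping.keys a \<notin> K)}"
    unfolding mideal_def
  proof (intro Collect_cong conj_cong refl ball_cong)
    fix p a assume "pc m p" "a \<in> Poly_Mapping.keys p"
    then have ka: "Poly_Mapping.keys a \<subseteq> {1..m}" by (simp add: pc_def)
    show "(\<exists>\<sigma>\<in>{\<sigma>. \<sigma> \<subseteq> {1..m} \<and> \<sigma> \<notin> K}. \<sigma> \<subseteq> Poly_Mapping.keys a) = (Poly_Mapping.keys a \<notin> K)"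
    proof
      assume "\<exists>\<sigma>\<in>{\<sigma>. \<sigma> \<subseteq> {1..m} \<and> \<sigma> \<notin> K}. \<sigma> \<subseteq> Poly_Mapping.keys a"
      then obtain \<sigma> where "\<sigma> \<notin> K" "\<sigma> \<subseteq> Poly_Mapping.keys a" by blast
      then show "Poly_Mapping.keys a \<notin> K" using K unfolding simplicial_complex_def by blast
    next
      assume "Poly_Mapping.keys a \<notin> K"
      then show "\<exists>\<sigma>\<in>{\<sigma>. \<sigma> \<subseteq> {1..m} \<and> \<sigma> \<notin> K}. \<sigma> \<subseteq> Poly_Mapping.keys a"
        using ka by blast
    qed
  qed
  finally show ?thesis .
qed

lemma quot_genideal:
  assumes R: "ring R" and I: "ideal I R" and S: "S \<subseteq> carrier R"
  shows "Idl\<^bsub>R Quot I\<^esub> ((+>\<^bsub>R\<^esub>) I ` S) = (+>\<^bsub>R\<^esub>) I ` (Idl\<^bsub>R\<^esub> S)"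
proof
  interpret R: ring R by (rule R)
  interpret Q: ring "R Quot I" by (rule ideal.quotient_is_ring[OF I])
  interpret h: ring_hom_ring R "R Quot I" "(+>\<^bsub>R\<^esub>) I" by (rule ideal.rcos_ring_hom_ring[OF I])
  have J: "ideal (Idl\<^bsub>R\<^esub> S) R" by (rule R.genideal_ideal[OF S])
  show "Idl\<^bsub>R Quot I\<^esub> ((+>\<^bsub>R\<^esub>) I ` S) \<subseteq> (+>\<^bsub>R\<^esub>) I ` (Idl\<^bsub>R\<^esub> S)"
    by (rule Q.genideal_minimal[OF R.ring_ideal_imp_quot_ideal[OF I J]])
       (use R.genideal_self[OF S] in blast)
  have hS: "(+>\<^bsub>R\<^esub>) I ` S \<subseteq> carrier (R Quot I)"
    using S h.hom_closed by blast
  have J': "ideal (Idl\<^bsub>R Quot I\<^esub> ((+>\<^bsub>R\<^esub>) I ` S)) (R Quot I)"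
    by (rule Q.genideal_ideal[OF hS])
  have V: "ideal {r \<in> carrier R. I +>\<^bsub>R\<^esub> r \<in> Idl\<^bsub>R Quot I\<^esub> ((+>\<^bsub>R\<^esub>) I ` S)} R"
    by (rule h.ideal_vimage[OF J'])
  have "Idl\<^bsub>R\<^esub> S \<subseteq> {r \<in> carrier R. I +>\<^bsub>R\<^esub> r \<in> Idl\<^bsub>R Quot I\<^esub> ((+>\<^bsub>R\<^esub>) I ` S)}"
    by (rule R.genideal_minimal[OF V]) (use S Q.genideal_self[OF hS] in blast)
  then show "(+>\<^bsub>R\<^esub>) I ` (Idl\<^bsub>R\<^esub> S) \<subseteq> Idl\<^bsub>R Quot I\<^esub> ((+>\<^bsub>R\<^esub>) I ` S)"
    by blast
qed

lemma SR_ideal_ideal: "ideal (SR_ideal m K) (ZPoly m)"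
proof -
  interpret R: ring "ZPoly m" by (rule ring_ZPoly)
  show ?thesis unfolding SR_ideal_def
    by (rule R.genideal_ideal) (use xmon_in_carrier[of _ m] in blast)
qed

lemma SR_restrict_coset:
  assumes "simplicial_complex m K" "simplicial_complex m W" "W \<subseteq> K"
    and x: "x \<in> carrier (ZPoly m)"
  shows "SR_restrict m W (SR_ideal m K +>\<^bsub>ZPoly m\<^esub> x) = SR_ideal m W +>\<^bsub>ZPoly m\<^esub> x"
proof -
  have sub: "SR_ideal m K \<subseteq> SR_ideal m W"
    using assms by (auto simp: SR_ideal_eq)
  have IW: "ideal (SR_ideal m W) (ZPoly m)" by (rule SR_ideal_ideal)
  have IK: "ideal (SR_ideal m K) (ZPoly m)" by (rule SR_ideal_ideal)
  have cl: "a + b \<in> SR_ideal m W" if "a \<in> SR_ideal m W" "b \<in> SR_ideal m W" for a b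
    using additive_subgroup.a_closed[OF ideal.axioms(1)[OF IW] that] by simp
  have z: "0 \<in> SR_ideal m K"
    using additive_subgroup.zero_closed[OF ideal.axioms(1)[OF IK]] by simp
  show ?thesis
    unfolding SR_restrict_def set_add_def' a_r_coset_def' ZPoly_simps
  proof (intro equalityI subsetI)
    fix y assume "y \<in> (\<Union>h\<in>SR_ideal m W. \<Union>k\<in>\<Union>h\<in>SR_ideal m K. {h + x}. {h + k})"
    then obtain w k where "w \<in> SR_ideal m W" "k \<in> SR_ideal m K" "y = w + (k + x)" by blast
    then show "y \<in> (\<Union>h\<in>SR_ideal m W. {h + x})"
      using cl sub by (auto intro!: bexI[of _ "w + k"] simp: add.assoc)
  next
    fix y assume "y \<in> (\<Union>h\<in>SR_ideal m W. {h + x})"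
    then obtain w where "w \<in> SR_ideal m W" "y = w + x" by blast
    moreover have "0 + x \<in> (\<Union>h\<in>SR_ideal m K. {h + x})" using z by blast
    ultimately show "y \<in> (\<Union>h\<in>SR_ideal m W. \<Union>k\<in>\<Union>h\<in>SR_ideal m K. {h + x}. {h + k})"
      by force
  qed
qed

lemma coset_eq_ideal_iff:
  assumes I: "ideal I (ZPoly m)" and x: "x \<in> carrier (ZPoly m)"
  shows "(I +>\<^bsub>ZPoly m\<^esub> x = I) \<longleftrightarrow> x \<in> I"
  using ideal.rcos_const_imp_mem[OF I x] ring.a_rcos_zero[OF ring_ZPoly I] by blast

theorem lemma4p5:
  fixes m :: nat and K W :: "nat set set"
  assumes "simplicial_complex m K"
    and "simplicial_complex m W"
    and "W \<subseteq> K"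
  shows "annihilator (SR_ring m K)
           (a_kernel (SR_ring m K) (SR_ring m W) (SR_restrict m W))
         = Idl\<^bsub>SR_ring m K\<^esub> (SR_xmon m K ` (W - cl (K - W)))"
proof -
  note K = assms(1) and W = assms(2) and WK = assms(3)
  define P where "P = ZPoly m"
  define IK where "IK = SR_ideal m K"
  define IW where "IW = SR_ideal m W"
  define h where "h = (+>\<^bsub>P\<^esub>) IK"
  define T where "T = W - cl (K - W)"
  have Q: "SR_ring m K = P Quot IK" by (simp add: SR_ring_def P_def IK_def)
  have ideK: "ideal IK P" and ideW: "ideal IW P" by (simp_all add: IK_def IW_def P_def SR_ideal_ideal)
  interpret R: cring P by (simp add: P_def cring_ZPoly)
  interpret QR: ring "P Quot IK" by (rule ideal.quotient_is_ring[OF ideK])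
  interpret hh: ring_hom_ring P "P Quot IK" h
    unfolding h_def by (rule ideal.rcos_ring_hom_ring[OF ideK])
  have cIK: "IK = {p. pc m p \<and> (\<forall>a\<in>Poly_Mapping.keys p. Poly_Mapping.keys a \<notin> K)}"
    unfolding IK_def using K by (rule SR_ideal_eq)
  have cIW: "IW = {p. pc m p \<and> (\<forall>a\<in>Poly_Mapping.keys p. Poly_Mapping.keys a \<notin> W)}"
    unfolding IW_def using W by (rule SR_ideal_eq)
  have carP: "carrier P = {p. pc m p}" by (simp add: P_def carrier_ZPoly)
  have carQ: "carrier (P Quot IK) = h ` carrier P"
    by (auto simp: FactRing_def A_RCOSETS_def' h_def)
  have zeroQ: "\<zero>\<^bsub>P Quot IK\<^esub> = IK" by (simp add: FactRing_def)
  have hzero: "h x = IK \<longleftrightarrow> x \<in> IK" if "x \<in> carrier P" for x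
    using coset_eq_ideal_iff[of IK m x] ideK that by (simp add: h_def P_def)
  have hmult: "h x \<otimes>\<^bsub>P Quot IK\<^esub> h y = h (x * y)" if "x \<in> carrier P" "y \<in> carrier P" for x y
    using hh.hom_mult[OF that] by (simp add: P_def)
  have IWc: "IW \<subseteq> carrier P" using cIW carP by auto
  have ker: "a_kernel (SR_ring m K) (SR_ring m W) (SR_restrict m W) = h ` IW"
  proof -
    have "a_kernel (SR_ring m K) (SR_ring m W) (SR_restrict m W)
        = {C \<in> h ` carrier P. SR_restrict m W C = IW}"
      unfolding a_kernel_def' Q carQ by (simp add: SR_ring_def FactRing_def IW_def)
    also have "\<dots> = h ` IW"
    proof -
      have "SR_restrict m W (h x) = IW \<longleftrightarrow> x \<in> IW" if "x \<in> carrier P" for x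
        using SR_restrict_coset[OF K W WK, of x] coset_eq_ideal_iff[of IW m x] ideW that
        by (simp add: h_def P_def IK_def IW_def)
      then show ?thesis using IWc by auto
    qed
    finally show ?thesis .
  qed
  define G where "G = {g \<in> carrier P. \<forall>f\<in>IW. g * f \<in> IK}"
  have ann: "annihilator (SR_ring m K) (a_kernel (SR_ring m K) (SR_ring m W) (SR_restrict m W)) = h ` G"
  proof -
    have "annihilator (SR_ring m K) (a_kernel (SR_ring m K) (SR_ring m W) (SR_restrict m W))
       = {C \<in> h ` carrier P. \<forall>b\<in>h ` IW. C \<otimes>\<^bsub>P Quot IK\<^esub> b = IK}"
      unfolding annihilator_def ker unfolding Q carQ zeroQ ..
    also have "\<dots> = h ` G"
    proof -
      have "(\<forall>b\<in>h ` IW. h g \<otimes>\<^bsub>P Quot IK\<^esub> b = IK) \<longleftrightarrow> (\<forall>f\<in>IW. g * f \<in> IK)"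
        if g: "g \<in> carrier P" for g
      proof -
        have "h g \<otimes>\<^bsub>P Quot IK\<^esub> h f = IK \<longleftrightarrow> g * f \<in> IK" if "f \<in> IW" for f
          using that IWc g hmult[of g f] hzero[of "g * f"] R.m_closed[of g f] by (auto simp: P_def)
        then show ?thesis by auto
      qed
      then show ?thesis unfolding G_def by auto
    qed
    finally show ?thesis .
  qed
  define J where "J = mideal m T"
  have Tm: "\<forall>\<sigma>\<in>T. \<sigma> \<subseteq> {1..m}" using W unfolding T_def simplicial_complex_def by auto
  have rhs: "Idl\<^bsub>SR_ring m K\<^esub> (SR_xmon m K ` T) = h ` J"
  proof -
    have "SR_xmon m K ` T = h ` (xmon ` T)"
      by (auto simp: SR_xmon_def h_def P_def IK_def)
    moreover have "xmon ` T \<subseteq> carrier P" using Tm xmon_in_carrier by (auto simp: P_def)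
    ultimately show ?thesis
      unfolding Q h_def J_def using quot_genideal[OF R.ring_axioms ideK, of "xmon ` T"]
        mideal_eq[OF Tm] by (simp add: P_def)
  qed
  have JG: "J \<subseteq> G"
  proof
    fix j assume j: "j \<in> J"
    have jc: "j \<in> carrier P" using j by (simp add: J_def mideal_def carP)
    have "j * f \<in> IK" if f: "f \<in> IW" for f
    proof -
      have "pc m j" using j by (simp add: J_def mideal_def)
      moreover have "pc m f" using f by (simp add: cIW)
      ultimately have "pc m (j * f)" by (rule pc_mult)
      moreover have "Poly_Mapping.keys c \<notin> K" if c: "c \<in> Poly_Mapping.keys (j * f)" for c
      proof
        assume cK: "Poly_Mapping.keys c \<in> K"
        obtain a b where ab: "a \<in> Poly_Mapping.keys j" "b \<in> Poly_Mapping.keys f" "c = a + b"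
          using c by (rule keys_mult_obtain)
        obtain \<sigma> where s: "\<sigma> \<in> T" "\<sigma> \<subseteq> Poly_Mapping.keys a" using j ab by (auto simp: J_def mideal_def)
        have bW: "Poly_Mapping.keys b \<notin> W" using f ab by (auto simp: cIW)
        have kc: "Poly_Mapping.keys c = Poly_Mapping.keys a \<union> Poly_Mapping.keys b"
          using ab by (simp add: keys_add_nat)
        have "Poly_Mapping.keys c \<notin> W"
        proof
          assume cW: "Poly_Mapping.keys c \<in> W"
          have "Poly_Mapping.keys b \<subseteq> Poly_Mapping.keys c" using kc by blast
          then have "Poly_Mapping.keys b \<in> W" using W cW unfolding simplicial_complex_def by blast
          then show False using bW by contradiction
        qed
        then have "Poly_Mapping.keys c \<in> K - W" using cK by blast
        moreover have "\<sigma> \<subseteq> Poly_Mapping.keys c" using s kc by blast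
        ultimately have "\<sigma> \<in> cl (K - W)" unfolding cl_def by blast
        then show False using s unfolding T_def by blast
      qed
      ultimately show ?thesis by (simp add: cIK)
    qed
    then show "j \<in> G" using jc by (simp add: G_def)
  qed
  have GJ: "\<exists>j\<in>J. h g = h j" if g: "g \<in> G" for g
  proof -
    have gc: "pc m g" using g by (simp add: G_def carP)
    define A where "A = {a \<in> Poly_Mapping.keys g. Poly_Mapping.keys a \<in> K}"
    define B where "B = {a \<in> Poly_Mapping.keys g. Poly_Mapping.keys a \<notin> K}"
    define mon where "mon = (\<lambda>a. Poly_Mapping.single a (Poly_Mapping.lookup g a) :: zpoly)"
    define j where "j = sum mon A"
    define r where "r = sum mon B"
    have AB: "A \<union> B = Poly_Mapping.keys g" by (auto simp: A_def B_def)
    have "g = sum mon (A \<union> B)"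
      unfolding AB mon_def by (rule poly_sum_monomials)
    then have gjr: "g = j + r" unfolding j_def r_def
      by (simp add: A_def B_def sum.union_disjoint disjoint_iff)
    have km: "Poly_Mapping.keys (mon a) \<subseteq> {a}" for a by (simp add: mon_def)
    have kj: "Poly_Mapping.keys j \<subseteq> A"
      using keys_sum[of mon A] km unfolding j_def by blast
    have kr: "Poly_Mapping.keys r \<subseteq> B"
      using keys_sum[of mon B] km unfolding r_def by blast
    have rI: "r \<in> IK" using kr gc by (auto simp: cIK B_def pc_def)
    have jJ: "j \<in> J"
    proof -
      have "pc m j" using kj gc by (auto simp: pc_def A_def)
      moreover have "Poly_Mapping.keys a \<in> T" if a: "a \<in> Poly_Mapping.keys j" for a
      proof -
        have aA: "a \<in> Poly_Mapping.keys g" "Poly_Mapping.keys a \<in> K" using a kj by (auto simp: A_def)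
        have ncl: "Poly_Mapping.keys a \<notin> cl (K - W)"
        proof
          assume "Poly_Mapping.keys a \<in> cl (K - W)"
          then obtain \<sigma> where s: "\<sigma> \<in> K" "\<sigma> \<notin> W" "Poly_Mapping.keys a \<subseteq> \<sigma>" by (auto simp: cl_def)
          have sm: "\<sigma> \<subseteq> {1..m}" using s K by (auto simp: simplicial_complex_def)
          have fs: "finite \<sigma>" using sm finite_subset by blast
          have "xmon \<sigma> \<in> IW"
            using fs sm s by (auto simp: cIW xmon_single pc_def keys_E)
          then have "g * xmon \<sigma> \<in> IK" using g by (simp add: G_def)
          moreover have "a + E \<sigma> \<in> Poly_Mapping.keys (g * xmon \<sigma>)"
            using aA(1) by (simp add: xmon_single fs in_keys_iff lookup_mult_single_shift)
          moreover have "Poly_Mapping.keys (a + E \<sigma>) = \<sigma>"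
            using s(3) fs by (auto simp: keys_add_nat keys_E)
          ultimately show False using s(1) by (auto simp: cIK)
        qed
        have "Poly_Mapping.keys a \<in> W"
        proof (rule ccontr)
          assume "Poly_Mapping.keys a \<notin> W"
          then have "Poly_Mapping.keys a \<in> K - W" using aA(2) by blast
          then have "Poly_Mapping.keys a \<in> cl (K - W)" unfolding cl_def by blast
          then show False using ncl by contradiction
        qed
        then show ?thesis using ncl unfolding T_def by blast
      qed
      ultimately show ?thesis by (auto simp: J_def mideal_def)
    qed
    have jc: "j \<in> carrier P" and rc: "r \<in> carrier P"
      using jJ rI by (auto simp: J_def mideal_def cIK carP)
    have "h g = h j \<oplus>\<^bsub>P Quot IK\<^esub> h r"
      using hh.hom_add[OF jc rc] gjr by (simp add: P_def)
    also have "h r = \<zero>\<^bsub>P Quot IK\<^esub>" using hzero[OF rc] rI zeroQ by simp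
    also have "h j \<oplus>\<^bsub>P Quot IK\<^esub> \<zero>\<^bsub>P Quot IK\<^esub> = h j" using hh.hom_closed[OF jc] by simp
    finally show ?thesis using jJ by blast
  qed
  have "h ` G = h ` J"
  proof
    show "h ` J \<subseteq> h ` G" using JG by blast
    show "h ` G \<subseteq> h ` J" using GJ by blast
  qed
  then show ?thesis using ann rhs unfolding T_def by simp
qed

end
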